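(* A graph $G=(V,E)$ is $(1,1)$-well-covered if and only if it admits a partition $V=(S,K)$, with $S$ an independent set and $K$ a clique, such that either $|N(x)\cap S|=0$ for every $x\in K$, or $|N(x)\cap S|=1$ for every $x \in K$.
   Context: A $(1,1)$-partition of $G$ is a partition of $V(G)$ into an independent set and a clique (possibly empty). A graph is well-covered if all its maximal independent sets have the same cardinality; it is $(1,1)$-well-covered if it admits a $(1,1)$-partition and is well-covered. $N(x)$ denotes the set of neighbors of $x$. *)

theory Defs
  imports Main
begin

definition simple_graph :: "'a set \<Rightarrow> ('a \<Rightarrow> 'a \<Rightarrow> bool) \<Rightarrow> bool" where
  "simple_graph V E \<longleftrightarrow> finite V \<and> (\<forall>x y. E x y \<longrightarrow> x \<in> V \<and> y \<in> V)
     \<and> (\<forall>x y. E x y \<longrightarrow> E y x) \<and> (\<forall>x. \<not> E x x)"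

definition nbrs :: "('a \<Rightarrow> 'a \<Rightarrow> bool) \<Rightarrow> 'a \<Rightarrow> 'a set" where
  "nbrs E x = {y. E x y}"

definition independent_set :: "'a set \<Rightarrow> ('a \<Rightarrow> 'a \<Rightarrow> bool) \<Rightarrow> 'a set \<Rightarrow> bool" where
  "independent_set V E S \<longleftrightarrow> S \<subseteq> V \<and> (\<forall>x\<in>S. \<forall>y\<in>S. \<not> E x y)"

definition clique :: "'a set \<Rightarrow> ('a \<Rightarrow> 'a \<Rightarrow> bool) \<Rightarrow> 'a set \<Rightarrow> bool" where
  "clique V E K \<longleftrightarrow> K \<subseteq> V \<and> (\<forall>x\<in>K. \<forall>y\<in>K. x \<noteq> y \<longrightarrow> E x y)"

definition maximal_independent_set :: "'a set \<Rightarrow> ('a \<Rightarrow> 'a \<Rightarrow> bool) \<Rightarrow> 'a set \<Rightarrow> bool" where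
  "maximal_independent_set V E S \<longleftrightarrow> independent_set V E S
     \<and> (\<forall>T. independent_set V E T \<and> S \<subseteq> T \<longrightarrow> T = S)"

definition well_covered :: "'a set \<Rightarrow> ('a \<Rightarrow> 'a \<Rightarrow> bool) \<Rightarrow> bool" where
  "well_covered V E \<longleftrightarrow> (\<forall>S T. maximal_independent_set V E S \<and> maximal_independent_set V E T
     \<longrightarrow> card S = card T)"

definition partition_11 :: "'a set \<Rightarrow> ('a \<Rightarrow> 'a \<Rightarrow> bool) \<Rightarrow> 'a set \<Rightarrow> 'a set \<Rightarrow> bool" where
  "partition_11 V E S K \<longleftrightarrow> S \<inter> K = {} \<and> S \<union> K = V \<and> independent_set V E S \<and> clique V E K"

definition well_covered_11 :: "'a set \<Rightarrow> ('a \<Rightarrow> 'a \<Rightarrow> bool) \<Rightarrow> bool" where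
  "well_covered_11 V E \<longleftrightarrow> (\<exists>S K. partition_11 V E S K) \<and> well_covered V E"

end

theory Submission
  imports Defs
begin

lemma fin_S:
  assumes "simple_graph V E" "partition_11 V E S K"
  shows "finite S" "finite K"
proof -
  have "finite V" using assms(1) unfolding simple_graph_def by simp
  moreover have "S \<subseteq> V" "K \<subseteq> V" using assms(2) unfolding partition_11_def by auto
  ultimately show "finite S" "finite K" by (auto intro: finite_subset)
qed

lemma mis_x:
  assumes "simple_graph V E" "partition_11 V E S K" "x \<in> K"
  shows "maximal_independent_set V E (insert x (S - nbrs E x))"
proof -
  have sym: "\<And>a b. E a b \<Longrightarrow> E b a" and irr: "\<And>a. \<not> E a a"
    using assms(1) unfolding simple_graph_def by auto
  have SV: "S \<subseteq> V" and KV: "K \<subseteq> V" and Si: "\<forall>a\<in>S. \<forall>b\<in>S. \<not> E a b"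
    and Kc: "\<forall>a\<in>K. \<forall>b\<in>K. a \<noteq> b \<longrightarrow> E a b" and SK: "S \<inter> K = {}" and SKV: "S \<union> K = V"
    using assms(2) unfolding partition_11_def independent_set_def clique_def by auto
  have ind: "independent_set V E (insert x (S - nbrs E x))"
    unfolding independent_set_def
  proof (intro conjI ballI)
    show "insert x (S - nbrs E x) \<subseteq> V" using SV KV assms(3) by auto
    fix a b assume a: "a \<in> insert x (S - nbrs E x)" and b: "b \<in> insert x (S - nbrs E x)"
    show "\<not> E a b"
    proof (cases "a = x")
      case True
      then show ?thesis using b irr unfolding nbrs_def by auto
    next
      case False
      then have aS: "a \<in> S" "\<not> E x a" using a unfolding nbrs_def by auto
      show ?thesis
      proof (cases "b = x")
        case True then show ?thesis using aS sym by blast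
      next
        case False then show ?thesis using aS b Si by auto
      qed
    qed
  qed
  moreover have mx: "\<And>T. independent_set V E T \<Longrightarrow> insert x (S - nbrs E x) \<subseteq> T \<Longrightarrow> T = insert x (S - nbrs E x)"
  proof -
    fix T assume T: "independent_set V E T" "insert x (S - nbrs E x) \<subseteq> T"
    show "T = insert x (S - nbrs E x)"
  proof
    show "T \<subseteq> insert x (S - nbrs E x)"
    proof
      fix y assume y: "y \<in> T"
      have xT: "x \<in> T" using T by auto
      have "y \<in> V" using T y unfolding independent_set_def by auto
      then have "y \<in> S \<or> y \<in> K" using SKV by auto
      moreover have nE: "\<not> E x y" using T(1) xT y unfolding independent_set_def by auto
      ultimately show "y \<in> insert x (S - nbrs E x)"
        using Kc assms(3) unfolding nbrs_def by auto
    qed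
  qed (use T in blast)
  qed
  ultimately show ?thesis unfolding maximal_independent_set_def by blast
qed

lemma mis_S:
  assumes "simple_graph V E" "partition_11 V E S K" "\<forall>x\<in>K. nbrs E x \<inter> S \<noteq> {}"
  shows "maximal_independent_set V E S"
proof -
  have "T = S" if T: "independent_set V E T" "S \<subseteq> T" for T
  proof
    show "T \<subseteq> S"
    proof
      fix y assume y: "y \<in> T"
      have "y \<in> V" using T y unfolding independent_set_def by auto
      then have "y \<in> S \<or> y \<in> K" using assms(2) unfolding partition_11_def by auto
      moreover have "y \<notin> K"
      proof
        assume "y \<in> K"
        then obtain z where "z \<in> S" "E y z" using assms(3) unfolding nbrs_def by auto
        then show False using T y unfolding independent_set_def by auto
      qed
      ultimately show "y \<in> S" by auto
    qed
  qed (use T in auto)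
  then show ?thesis using assms(2) unfolding maximal_independent_set_def partition_11_def by auto
qed

lemma mis_cases:
  assumes "simple_graph V E" "partition_11 V E S K" "maximal_independent_set V E I"
  shows "I = S \<or> (\<exists>x\<in>K. I = insert x (S - nbrs E x))"
proof (cases "I \<inter> K = {}")
  case True
  then have "I \<subseteq> S" using assms unfolding maximal_independent_set_def independent_set_def partition_11_def
    by auto
  then have "I = S" using assms unfolding maximal_independent_set_def partition_11_def by auto
  then show ?thesis by auto
next
  case False
  then obtain x where x: "x \<in> I" "x \<in> K" by auto
  have "I \<subseteq> insert x (S - nbrs E x)"
  proof
    fix y assume y: "y \<in> I"
    have "y \<in> V" using assms(3) y unfolding maximal_independent_set_def independent_set_def by auto
    then have "y \<in> S \<or> y \<in> K" using assms(2) unfolding partition_11_def by auto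
    moreover have nE: "\<not> E x y" using assms(3) x y
      unfolding maximal_independent_set_def independent_set_def by auto
    ultimately show "y \<in> insert x (S - nbrs E x)"
      using assms(2) x unfolding partition_11_def clique_def nbrs_def by auto
  qed
  then have "insert x (S - nbrs E x) = I"
    using assms(3) mis_x[OF assms(1,2) x(2)] unfolding maximal_independent_set_def by auto
  then show ?thesis using x by auto
qed

lemma card_x:
  assumes "simple_graph V E" "partition_11 V E S K" "x \<in> K"
  shows "card (insert x (S - nbrs E x)) = Suc (card S - card (nbrs E x \<inter> S))"
    "card (nbrs E x \<inter> S) \<le> card S"
proof -
  have f: "finite S" using fin_S[OF assms(1,2)] by auto
  have xS: "x \<notin> S" using assms(2,3) unfolding partition_11_def by auto
  have "S - nbrs E x = S - (nbrs E x \<inter> S)" by auto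
  then have "card (S - nbrs E x) = card S - card (nbrs E x \<inter> S)"
    using f by (simp add: card_Diff_subset finite_subset)
  then show "card (insert x (S - nbrs E x)) = Suc (card S - card (nbrs E x \<inter> S))"
    using f xS by simp
  show "card (nbrs E x \<inter> S) \<le> card S" using f by (simp add: card_mono)
qed

theorem lemma3:
  assumes "simple_graph V E"
  shows "well_covered_11 V E \<longleftrightarrow>
    (\<exists>S K. partition_11 V E S K \<and>
       ((\<forall>x\<in>K. card (nbrs E x \<inter> S) = 0) \<or> (\<forall>x\<in>K. card (nbrs E x \<inter> S) = 1)))"
proof
  assume "well_covered_11 V E"
  then obtain S K where P: "partition_11 V E S K" and W: "well_covered V E"
    unfolding well_covered_11_def by auto
  have f: "finite S" using fin_S[OF assms P] by auto
  have eqc: "card (insert x (S - nbrs E x)) = card I"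
    if "x \<in> K" "maximal_independent_set V E I" for x I
    using W mis_x[OF assms P that(1)] that(2) unfolding well_covered_def by blast
  show "\<exists>S K. partition_11 V E S K \<and>
       ((\<forall>x\<in>K. card (nbrs E x \<inter> S) = 0) \<or> (\<forall>x\<in>K. card (nbrs E x \<inter> S) = 1))"
  proof (cases "\<exists>x0\<in>K. nbrs E x0 \<inter> S = {}")
    case True
    then obtain x0 where x0: "x0 \<in> K" "nbrs E x0 \<inter> S = {}" by auto
    have "card (nbrs E y \<inter> S) = 0" if y: "y \<in> K" for y
    proof -
      have "card (insert y (S - nbrs E y)) = card (insert x0 (S - nbrs E x0))"
        using eqc[OF y mis_x[OF assms P x0(1)]] .
      then show ?thesis using card_x[OF assms P y] card_x[OF assms P x0(1)] x0(2) by simp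
    qed
    then show ?thesis using P by blast
  next
    case False
    then have M: "maximal_independent_set V E S" using mis_S[OF assms P] by auto
    have "card (nbrs E y \<inter> S) = 1" if y: "y \<in> K" for y
    proof -
      have "card (insert y (S - nbrs E y)) = card S" using eqc[OF y M] .
      moreover have "card (nbrs E y \<inter> S) \<noteq> 0"
        using False y f by (auto simp: finite_subset)
      ultimately show ?thesis using card_x[OF assms P y] by simp
    qed
    then show ?thesis using P by blast
  qed
next
  assume "\<exists>S K. partition_11 V E S K \<and>
       ((\<forall>x\<in>K. card (nbrs E x \<inter> S) = 0) \<or> (\<forall>x\<in>K. card (nbrs E x \<inter> S) = 1))"
  then obtain S K where P: "partition_11 V E S K" and D:
    "(\<forall>x\<in>K. card (nbrs E x \<inter> S) = 0) \<or> (\<forall>x\<in>K. card (nbrs E x \<inter> S) = 1)" by auto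
  have f: "finite S" using fin_S[OF assms P] by auto
  define c where "c = (if K \<noteq> {} \<and> (\<forall>x\<in>K. card (nbrs E x \<inter> S) = 0) then Suc (card S) else card S)"
  have "card I = c" if I: "maximal_independent_set V E I" for I
  proof -
    from mis_cases[OF assms P I] show ?thesis
    proof
      assume IS: "I = S"
      show ?thesis
      proof (cases "K \<noteq> {} \<and> (\<forall>x\<in>K. card (nbrs E x \<inter> S) = 0)")
        case True
        then obtain x where x: "x \<in> K" "card (nbrs E x \<inter> S) = 0" by auto
        then have "nbrs E x \<inter> S = {}" using f by (simp add: finite_subset)
        then have "insert x (S - nbrs E x) = insert x S" by auto
        moreover have "x \<notin> S" using P x unfolding partition_11_def by auto
        ultimately have "insert x (S - nbrs E x) \<noteq> S" by auto
        moreover have "S \<subseteq> insert x (S - nbrs E x)" using \<open>nbrs E x \<inter> S = {}\<close> by auto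
        ultimately show ?thesis using I IS mis_x[OF assms P x(1)]
          unfolding maximal_independent_set_def by blast
      qed (use IS c_def in auto)
    next
      assume "\<exists>x\<in>K. I = insert x (S - nbrs E x)"
      then obtain x where x: "x \<in> K" "I = insert x (S - nbrs E x)" by auto
      show ?thesis using card_x[OF assms P x(1)] x D unfolding c_def by auto
    qed
  qed
  then have "well_covered V E" unfolding well_covered_def by auto
  then show "well_covered_11 V E" using P unfolding well_covered_11_def by auto
qed

end
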